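(* Let $Q$ be any quandle and let $K$ be an oriented knot whose symmetry type is reversible, positive amphicheiral, or fully amphicheiral (i.e. not chiral and not negative amphicheiral). Then $$\mathrm{Col}_Q(rm(K))=\mathrm{Col}_Q(m(K))=\mathrm{Col}_Q(r(K))=\mathrm{Col}_Q(K).$$
   Context: A quandle is a set $X$ with a binary operation $*$ such that $a*a=a$ for all $a$; for all $b,c$ there is a unique $a$ with $a*b=c$; and $(a*b)*c=(a*c)*(b*c)$ for all $a,b,c$. A coloring of an oriented knot diagram by a quandle $X$ is a map from the set of arcs of the diagram to $X$ such that at each crossing, if the over-arc is colored $y$ and the under-arc on one side (determined by the orientation of the over-arc, under a fixed standard convention) is colored $x$, then the under-arc on the other side is colored $x*y$. Equivalently, colorings correspond bijectively to quandle homomorphisms from the fundamental quandle of the knot to $X$. $\mathrm{Col}_Q(K)$ denotes the number (cardinality) of colorings of a diagram of $K$ by $Q$; it is a knot invariant. For an oriented knot $K$, $m(K)$ is its mirror image and $r(K)$ is $K$ with orientation reversed; $K=K'$ means there is an orientation-preserving homeomorphism of $S^3$ taking $K$ to $K'$ respecting orientations. $K$ is reversible if its only symmetry is $K=r(K)$; negative amphicheiral if its only symmetry is $K=rm(K)$; positive amphicheiral if its only symmetry is $K=m(K)$; chiral if it has none of the symmetries $K=r(K)$, $K=m(K)$, $K=rm(K)$; fully amphicheiral if $K=r(K)=m(K)=rm(K)$. *)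

theory Defs
  imports "HOL-Library.Equipollence"
begin

text \<open>
  Combinatorial model of oriented knots in S^3 via closed braids (Alexander's
  theorem + Markov's theorem).  A braid on n strands is a word of nonzero
  integers; the letter a stands for sigma_|a| (a > 0) or its inverse (a < 0),
  with 1 <= |a| < n.  Strands are oriented downwards, positions 1..n left to right.
  Equality of oriented knots (orientation preserving homeomorphism of S^3
  respecting orientations) corresponds to Markov equivalence of braids.
\<close>

type_synonym braid = "nat \<times> int list"

definition valid_braid :: "braid \<Rightarrow> bool" where
  "valid_braid b \<longleftrightarrow> fst b \<ge> 1 \<and> (\<forall>a\<in>set (snd b). a \<noteq> 0 \<and> nat \<bar>a\<bar> < fst b)"

definition letter_perm :: "int \<Rightarrow> nat \<Rightarrow> nat" where
  "letter_perm a i = (let j = nat \<bar>a\<bar> in if i = j then j + 1 else if i = j + 1 then j else i)"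

fun braid_perm :: "int list \<Rightarrow> nat \<Rightarrow> nat" where
  "braid_perm [] = id"
| "braid_perm (a # w) = braid_perm w \<circ> letter_perm a"

text \<open>The closure of the braid has exactly one component, i.e. is a knot.\<close>
definition is_knot_braid :: "braid \<Rightarrow> bool" where
  "is_knot_braid b \<longleftrightarrow> valid_braid b \<and>
     (\<forall>i\<in>{1..fst b}. \<exists>m. (braid_perm (snd b) ^^ m) 1 = i)"

inductive markov_step :: "braid \<Rightarrow> braid \<Rightarrow> bool" where
  free_cancel: "valid_braid (n, u @ [a, -a] @ v) \<Longrightarrow>
     markov_step (n, u @ [a, -a] @ v) (n, u @ v)"
| far_comm: "valid_braid (n, u @ [a, b] @ v) \<Longrightarrow> a > 0 \<Longrightarrow> b > 0 \<Longrightarrow> \<bar>a - b\<bar> \<ge> 2 \<Longrightarrow>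
     markov_step (n, u @ [a, b] @ v) (n, u @ [b, a] @ v)"
| braid_rel: "valid_braid (n, u @ [a, b, a] @ v) \<Longrightarrow> a > 0 \<Longrightarrow> b > 0 \<Longrightarrow> \<bar>a - b\<bar> = 1 \<Longrightarrow>
     markov_step (n, u @ [a, b, a] @ v) (n, u @ [b, a, b] @ v)"
| conj: "valid_braid (n, a # w) \<Longrightarrow> markov_step (n, a # w) (n, w @ [a])"
| stab_pos: "valid_braid (n, w) \<Longrightarrow> markov_step (n, w) (Suc n, w @ [int n])"
| stab_neg: "valid_braid (n, w) \<Longrightarrow> markov_step (n, w) (Suc n, w @ [- int n])"

definition knot_eq :: "braid \<Rightarrow> braid \<Rightarrow> bool" where
  "knot_eq = (symclp markov_step)\<^sup>*\<^sup>*"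

text \<open>Mirror image (all crossings switched) and reversal (orientation reversed).\<close>
definition mirror :: "braid \<Rightarrow> braid" where
  "mirror b = (fst b, map uminus (snd b))"

definition reverse :: "braid \<Rightarrow> braid" where
  "reverse b = (fst b, rev (snd b))"

definition reversible :: "braid \<Rightarrow> bool" where
  "reversible K \<longleftrightarrow> knot_eq K (reverse K) \<and> \<not> knot_eq K (mirror K)
      \<and> \<not> knot_eq K (reverse (mirror K))"

definition negative_amphicheiral :: "braid \<Rightarrow> bool" where
  "negative_amphicheiral K \<longleftrightarrow> knot_eq K (reverse (mirror K)) \<and> \<not> knot_eq K (reverse K)
      \<and> \<not> knot_eq K (mirror K)"

definition positive_amphicheiral :: "braid \<Rightarrow> bool" where
  "positive_amphicheiral K \<longleftrightarrow> knot_eq K (mirror K) \<and> \<not> knot_eq K (reverse K)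
      \<and> \<not> knot_eq K (reverse (mirror K))"

definition fully_amphicheiral :: "braid \<Rightarrow> bool" where
  "fully_amphicheiral K \<longleftrightarrow> knot_eq K (reverse K) \<and> knot_eq K (mirror K)
      \<and> knot_eq K (reverse (mirror K))"

definition quandle :: "'a set \<Rightarrow> ('a \<Rightarrow> 'a \<Rightarrow> 'a) \<Rightarrow> bool" where
  "quandle X op \<longleftrightarrow> (\<forall>a\<in>X. \<forall>b\<in>X. op a b \<in> X)
     \<and> (\<forall>a\<in>X. op a a = a)
     \<and> (\<forall>b\<in>X. \<forall>c\<in>X. \<exists>!a. a \<in> X \<and> op a b = c)
     \<and> (\<forall>a\<in>X. \<forall>b\<in>X. \<forall>c\<in>X. op (op a b) c = op (op a c) (op b c))"

text \<open>
  Colorings of the closed braid diagram.  c k i is the colour of the arc passing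
  through position i at level k (0 <= k <= length w); letter k of w is the crossing
  between levels k and k+1.  Level length w is identified with level 0 (closure).
  At each crossing the over-arc keeps its colour y, and the under-arc colour
  changes from x to x*y when passing from the right to the left of the over-arc
  (right with respect to the orientation of the over-arc).
\<close>
definition colorings :: "'a set \<Rightarrow> ('a \<Rightarrow> 'a \<Rightarrow> 'a) \<Rightarrow> braid \<Rightarrow> (nat \<Rightarrow> nat \<Rightarrow> 'a) set" where
  "colorings X op b = {c. let n = fst b; w = snd b; L = length w in
     (\<forall>k\<le>L. \<forall>i\<in>{1..n}. c k i \<in> X)
     \<and> (\<forall>k i. (L < k \<or> i \<notin> {1..n}) \<longrightarrow> c k i = undefined)
     \<and> (\<forall>i. c L i = c 0 i)
     \<and> (\<forall>k<L. let a = w ! k; j = nat \<bar>a\<bar> in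
          (\<forall>i\<in>{1..n}. i \<noteq> j \<and> i \<noteq> j + 1 \<longrightarrow> c (Suc k) i = c k i)
        \<and> (a > 0 \<longrightarrow> c (Suc k) (j + 1) = c k j \<and> c k (j + 1) = op (c (Suc k) j) (c k j))
        \<and> (a < 0 \<longrightarrow> c (Suc k) j = c k (j + 1) \<and> c (Suc k) (j + 1) = op (c k j) (c k (j + 1))))}"

end

theory Submission
  imports Defs
begin

locale qd =
  fixes X :: "'a set" and op :: "'a \<Rightarrow> 'a \<Rightarrow> 'a"
  assumes q: "quandle X op"
begin

lemma cl: "a \<in> X \<Longrightarrow> b \<in> X \<Longrightarrow> op a b \<in> X"
  using q unfolding quandle_def by blast
lemma idem: "a \<in> X \<Longrightarrow> op a a = a"
  using q unfolding quandle_def by blast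
lemma ex1: "b \<in> X \<Longrightarrow> c \<in> X \<Longrightarrow> \<exists>!a. a \<in> X \<and> op a b = c"
  using q unfolding quandle_def by blast
lemma dist: "a \<in> X \<Longrightarrow> b \<in> X \<Longrightarrow> c \<in> X \<Longrightarrow> op (op a b) c = op (op a c) (op b c)"
  using q unfolding quandle_def by blast

definition rdiv :: "'a \<Rightarrow> 'a \<Rightarrow> 'a" where
  "rdiv c b = (THE a. a \<in> X \<and> op a b = c)"

lemma rdiv: "b \<in> X \<Longrightarrow> c \<in> X \<Longrightarrow> rdiv c b \<in> X \<and> op (rdiv c b) b = c"
  unfolding rdiv_def using theI'[OF ex1] by blast

lemma rdiv_uniq: "a \<in> X \<Longrightarrow> b \<in> X \<Longrightarrow> op a b = c \<Longrightarrow> rdiv c b = a"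
  unfolding rdiv_def using ex1[of b c] cl[of a b]
  by (metis (mono_tags, lifting) the1_equality)

definition Lev :: "nat \<Rightarrow> (nat \<Rightarrow> 'a) set" where
  "Lev n = {x. (\<forall>i\<in>{1..n}. x i \<in> X) \<and> (\<forall>i. i \<notin> {1..n} \<longrightarrow> x i = undefined)}"

definition N :: "nat \<Rightarrow> (nat \<Rightarrow> 'a) \<Rightarrow> (nat \<Rightarrow> 'a)" where
  "N j x = x(j := x (Suc j), Suc j := op (x j) (x (Suc j)))"

definition P :: "nat \<Rightarrow> (nat \<Rightarrow> 'a) \<Rightarrow> (nat \<Rightarrow> 'a)" where
  "P j x = x(j := rdiv (x (Suc j)) (x j), Suc j := x j)"

definition F :: "int \<Rightarrow> (nat \<Rightarrow> 'a) \<Rightarrow> (nat \<Rightarrow> 'a)" where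
  "F a = (if a > 0 then P (nat \<bar>a\<bar>) else N (nat \<bar>a\<bar>))"

fun Phi :: "int list \<Rightarrow> (nat \<Rightarrow> 'a) \<Rightarrow> (nat \<Rightarrow> 'a)" where
  "Phi [] = id"
| "Phi (a # w) = Phi w \<circ> F a"

definition Fix :: "nat \<Rightarrow> int list \<Rightarrow> (nat \<Rightarrow> 'a) set" where
  "Fix n w = {x \<in> Lev n. Phi w x = x}"

definition ok :: "nat \<Rightarrow> int \<Rightarrow> bool" where
  "ok n a \<longleftrightarrow> a \<noteq> 0 \<and> nat \<bar>a\<bar> < n"

lemma LevD: "x \<in> Lev n \<Longrightarrow> 1 \<le> i \<Longrightarrow> i \<le> n \<Longrightarrow> x i \<in> X"
  unfolding Lev_def by auto

lemma N_Lev: "x \<in> Lev n \<Longrightarrow> 1 \<le> j \<Longrightarrow> j < n \<Longrightarrow> N j x \<in> Lev n"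
  unfolding Lev_def N_def by (auto intro!: cl)

lemma P_Lev: "x \<in> Lev n \<Longrightarrow> 1 \<le> j \<Longrightarrow> j < n \<Longrightarrow> P j x \<in> Lev n"
  unfolding Lev_def P_def using rdiv by auto

lemma NP: "x \<in> Lev n \<Longrightarrow> 1 \<le> j \<Longrightarrow> j < n \<Longrightarrow> N j (P j x) = x"
  using LevD[of x n j] LevD[of x n "Suc j"] rdiv[of "x j" "x (Suc j)"]
  unfolding N_def P_def by (auto simp: fun_eq_iff)

lemma PN: "x \<in> Lev n \<Longrightarrow> 1 \<le> j \<Longrightarrow> j < n \<Longrightarrow> P j (N j x) = x"
  using LevD[of x n j] LevD[of x n "Suc j"] rdiv_uniq[of "x j" "x (Suc j)"]
  unfolding N_def P_def by (auto simp: fun_eq_iff)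

lemma F_Lev: "ok n a \<Longrightarrow> x \<in> Lev n \<Longrightarrow> F a x \<in> Lev n"
  unfolding ok_def F_def using N_Lev P_Lev by auto

lemma FF: "ok n a \<Longrightarrow> x \<in> Lev n \<Longrightarrow> F (-a) (F a x) = x"
  unfolding ok_def F_def using NP PN by auto

lemma Phi_app: "Phi (u @ v) = Phi v \<circ> Phi u"
  by (induction u) auto

lemma Phi_Lev: "\<forall>a\<in>set w. ok n a \<Longrightarrow> x \<in> Lev n \<Longrightarrow> Phi w x \<in> Lev n"
  by (induction w arbitrary: x) (auto simp: F_Lev)

lemma Phi_inv: "\<forall>a\<in>set w. ok n a \<Longrightarrow> x \<in> Lev n \<Longrightarrow> Phi (rev (map uminus w)) (Phi w x) = x"
  by (induction w arbitrary: x) (auto simp: Phi_app F_Lev FF)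

lemma Fix_inv: assumes "\<forall>a\<in>set w. ok n a" shows "Fix n (rev (map uminus w)) = Fix n w"
proof -
  have w: "\<forall>a\<in>set (rev (map uminus w)). ok n a" using assms by (auto simp: ok_def)
  have ww: "rev (map uminus (rev (map uminus w))) = w" by (simp add: rev_map)
  show ?thesis unfolding Fix_def
    using Phi_inv[OF assms] Phi_inv[OF w] unfolding ww by metis
qed


lemma loc:
  assumes "ok n a" "x \<in> Lev n" "y \<in> Lev n"
  shows "((\<forall>i\<in>{1..n}. i \<noteq> nat \<bar>a\<bar> \<and> i \<noteq> nat \<bar>a\<bar> + 1 \<longrightarrow> y i = x i)
     \<and> (a > 0 \<longrightarrow> y (nat \<bar>a\<bar> + 1) = x (nat \<bar>a\<bar>) \<and> x (nat \<bar>a\<bar> + 1) = op (y (nat \<bar>a\<bar>)) (x (nat \<bar>a\<bar>)))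
     \<and> (a < 0 \<longrightarrow> y (nat \<bar>a\<bar>) = x (nat \<bar>a\<bar> + 1) \<and> y (nat \<bar>a\<bar> + 1) = op (x (nat \<bar>a\<bar>)) (x (nat \<bar>a\<bar> + 1))))
     \<longleftrightarrow> y = F a x"
proof -
  define j where "j = nat \<bar>a\<bar>"
  have j: "1 \<le> j" "j < n" "a \<noteq> 0" using assms(1) unfolding ok_def j_def by auto
  have xj: "x j \<in> X" "x (Suc j) \<in> X" "y j \<in> X" "y (Suc j) \<in> X"
    using LevD[OF assms(2)] LevD[OF assms(3)] j by auto
  have out: "\<And>i. i \<notin> {1..n} \<Longrightarrow> x i = undefined \<and> y i = undefined"
    using assms(2,3) unfolding Lev_def by auto
  show ?thesis unfolding j_def[symmetric]
  proof
    assume H: "(\<forall>i\<in>{1..n}. i \<noteq> j \<and> i \<noteq> j + 1 \<longrightarrow> y i = x i)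
     \<and> (a > 0 \<longrightarrow> y (j + 1) = x j \<and> x (j + 1) = op (y j) (x j))
     \<and> (a < 0 \<longrightarrow> y j = x (j + 1) \<and> y (j + 1) = op (x j) (x (j + 1)))"
    show "y = F a x"
    proof (cases "a > 0")
      case True
      have "rdiv (x (Suc j)) (x j) = y j" using H True xj rdiv_uniq[of "y j" "x j" "x (Suc j)"] by auto
      then show ?thesis using H True out unfolding F_def j_def[symmetric] P_def
        by (auto simp: fun_eq_iff; metis atLeastAtMost_iff)
    next
      case False
      then have an: "a < 0" using j by auto
      show ?thesis unfolding F_def j_def[symmetric] N_def using False
      proof (simp, intro ext)
        fix i show "y i = (x(j := x (Suc j), Suc j := op (x j) (x (Suc j)))) i"
        proof (cases "i = j \<or> i = Suc j")
          case True then show ?thesis using H an by auto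
        next
          case F: False
          show ?thesis
          proof (cases "i \<in> {1..n}")
            case True then show ?thesis using H F by auto
          next
            case False then show ?thesis using out F by auto
          qed
        qed
      qed
    qed
  next
    assume "y = F a x"
    then show "(\<forall>i\<in>{1..n}. i \<noteq> j \<and> i \<noteq> j + 1 \<longrightarrow> y i = x i)
     \<and> (a > 0 \<longrightarrow> y (j + 1) = x j \<and> x (j + 1) = op (y j) (x j))
     \<and> (a < 0 \<longrightarrow> y j = x (j + 1) \<and> y (j + 1) = op (x j) (x (j + 1)))"
      using xj rdiv[of "x j" "x (Suc j)"] unfolding F_def j_def[symmetric] N_def P_def by auto
  qed
qed

lemma col_iff:
  assumes "\<forall>a\<in>set w. ok n a"
  shows "c \<in> colorings X op (n,w) \<longleftrightarrow> (\<forall>k\<le>length w. c k \<in> Lev n)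
     \<and> (\<forall>k>length w. c k = (\<lambda>_. undefined)) \<and> c (length w) = c 0
     \<and> (\<forall>k<length w. c (Suc k) = F (w!k) (c k))"
proof
  assume H: "c \<in> colorings X op (n,w)"
  then have A: "\<forall>k\<le>length w. c k \<in> Lev n" unfolding colorings_def Lev_def Let_def by auto
  moreover have "\<forall>k>length w. c k = (\<lambda>_. undefined)" using H unfolding colorings_def Let_def by auto
  moreover have "c (length w) = c 0" using H unfolding colorings_def Let_def by auto
  moreover have "\<forall>k<length w. c (Suc k) = F (w!k) (c k)"
  proof (intro allI impI)
    fix k assume k: "k < length w"
    have "ok n (w!k)" using assms k by auto
    then show "c (Suc k) = F (w!k) (c k)"
      using loc[of n "w!k" "c k" "c (Suc k)"] A k H unfolding colorings_def Let_def by auto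
  qed
  ultimately show "(\<forall>k\<le>length w. c k \<in> Lev n)
     \<and> (\<forall>k>length w. c k = (\<lambda>_. undefined)) \<and> c (length w) = c 0
     \<and> (\<forall>k<length w. c (Suc k) = F (w!k) (c k))" by blast
next
  assume H: "(\<forall>k\<le>length w. c k \<in> Lev n)
     \<and> (\<forall>k>length w. c k = (\<lambda>_. undefined)) \<and> c (length w) = c 0
     \<and> (\<forall>k<length w. c (Suc k) = F (w!k) (c k))"
  have L: "\<forall>k<length w. let a = w ! k; j = nat \<bar>a\<bar> in
          (\<forall>i\<in>{1..n}. i \<noteq> j \<and> i \<noteq> j + 1 \<longrightarrow> c (Suc k) i = c k i)
        \<and> (a > 0 \<longrightarrow> c (Suc k) (j + 1) = c k j \<and> c k (j + 1) = op (c (Suc k) j) (c k j))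
        \<and> (a < 0 \<longrightarrow> c (Suc k) j = c k (j + 1) \<and> c (Suc k) (j + 1) = op (c k j) (c k (j + 1)))"
  proof (intro allI impI)
    fix k assume k: "k < length w"
    have ok: "ok n (w!k)" using assms k by auto
    have ck: "c k \<in> Lev n" "c (Suc k) \<in> Lev n" using H k by (meson Suc_leI less_imp_le_nat)+
    have eq: "c (Suc k) = F (w!k) (c k)" using H k by auto
    show "let a = w ! k; j = nat \<bar>a\<bar> in
          (\<forall>i\<in>{1..n}. i \<noteq> j \<and> i \<noteq> j + 1 \<longrightarrow> c (Suc k) i = c k i)
        \<and> (a > 0 \<longrightarrow> c (Suc k) (j + 1) = c k j \<and> c k (j + 1) = op (c (Suc k) j) (c k j))
        \<and> (a < 0 \<longrightarrow> c (Suc k) j = c k (j + 1) \<and> c (Suc k) (j + 1) = op (c k j) (c k (j + 1)))"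
      unfolding Let_def by (rule iffD2[OF loc[OF ok ck] eq])
  qed
  have "\<forall>k\<le>length w. \<forall>i\<in>{1..n}. c k i \<in> X" using H unfolding Lev_def by blast
  moreover have "\<forall>k i. (length w < k \<or> i \<notin> {1..n}) \<longrightarrow> c k i = undefined"
  proof (intro allI impI)
    fix k i assume "length w < k \<or> i \<notin> {1..n}"
    then show "c k i = undefined"
    proof
      assume "length w < k" then show ?thesis using H by simp
    next
      assume i: "i \<notin> {1..n}"
      show ?thesis
      proof (cases "k \<le> length w")
        case True then have "c k \<in> Lev n" using H by blast
        then show ?thesis using i unfolding Lev_def by blast
      next
        case False then show ?thesis using H by simp
      qed
    qed
  qed
  moreover have "\<forall>i. c (length w) i = c 0 i" using H by simp
  ultimately show "c \<in> colorings X op (n,w)" using L unfolding colorings_def Let_def by simp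
qed

lemma col_Fix:
  assumes "\<forall>a\<in>set w. ok n a"
  shows "colorings X op (n,w) \<approx> Fix n w"
proof -
  define g where "g x = (\<lambda>k. if k \<le> length w then Phi (take k w) x else (\<lambda>_. undefined))" for x
  have tk: "c k = Phi (take k w) (c 0)" if "c \<in> colorings X op (n,w)" "k \<le> length w" for c k
    using that(2)
  proof (induction k)
    case 0 then show ?case by simp
  next
    case (Suc k)
    then show ?case using that(1) col_iff[OF assms]
      by (simp add: take_Suc_conv_app_nth Phi_app)
  qed
  have "bij_betw (\<lambda>c. c 0) (colorings X op (n,w)) (Fix n w)"
  proof (rule bij_betw_byWitness[where f'=g])
    show "\<forall>c\<in>colorings X op (n,w). g (c 0) = c"
    proof
      fix c assume c: "c \<in> colorings X op (n,w)"
      have C: "\<forall>k>length w. c k = (\<lambda>_. undefined)" using c col_iff[OF assms] by blast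
      show "g (c 0) = c"
      proof (rule ext)
        fix k show "g (c 0) k = c k"
        proof (cases "k \<le> length w")
          case True then show ?thesis unfolding g_def using tk[OF c True] by simp
        next
          case False then show ?thesis unfolding g_def using C by simp
        qed
      qed
    qed
    show "\<forall>x\<in>Fix n w. g x 0 = x" unfolding g_def by simp
    show "(\<lambda>c. c 0) ` colorings X op (n,w) \<subseteq> Fix n w"
    proof
      fix x assume "x \<in> (\<lambda>c. c 0) ` colorings X op (n,w)"
      then obtain c where c: "c \<in> colorings X op (n,w)" "x = c 0" by auto
      have C: "c 0 \<in> Lev n" "c (length w) = c 0" using c col_iff[OF assms] by blast+
      show "x \<in> Fix n w" unfolding Fix_def using C tk[OF c(1) order_refl] c(2) by simp
    qed
    show "g ` Fix n w \<subseteq> colorings X op (n,w)"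
    proof
      fix c assume "c \<in> g ` Fix n w"
      then obtain x where x: "x \<in> Fix n w" "c = g x" by auto
      have xl: "x \<in> Lev n" "Phi w x = x" using x unfolding Fix_def by auto
      have tko: "\<forall>a\<in>set (take k w). ok n a" for k using assms by (meson in_set_takeD)
      have 1: "\<forall>k\<le>length w. c k \<in> Lev n" unfolding x(2) g_def using Phi_Lev[OF tko xl(1)] by simp
      have 2: "\<forall>k>length w. c k = (\<lambda>_. undefined)" unfolding x(2) g_def by simp
      have 3: "c (length w) = c 0" unfolding x(2) g_def using xl(2) by simp
      have 4: "\<forall>k<length w. c (Suc k) = F (w!k) (c k)"
      proof (intro allI impI)
        fix k assume k: "k < length w"
        have "Phi (take (Suc k) w) x = F (w!k) (Phi (take k w) x)"
          using k by (simp add: take_Suc_conv_app_nth Phi_app)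
        then show "c (Suc k) = F (w!k) (c k)" unfolding x(2) g_def using k by simp
      qed
      show "c \<in> colorings X op (n,w)" unfolding col_iff[OF assms] using 1 2 3 4 by blast
    qed
  qed
  then show ?thesis unfolding eqpoll_def by blast
qed


lemma vok: "valid_braid (n, w) \<Longrightarrow> \<forall>a\<in>set w. ok n a"
  unfolding valid_braid_def ok_def by auto

lemma Fix_eq: "\<forall>x\<in>Lev n. Phi w x = Phi w' x \<Longrightarrow> Fix n w = Fix n w'"
  unfolding Fix_def by auto

lemma Phi_mid: "\<forall>y\<in>Lev n. Phi m y = Phi m' y \<Longrightarrow> \<forall>a\<in>set u. ok n a \<Longrightarrow>
   \<forall>x\<in>Lev n. Phi (u @ m @ v) x = Phi (u @ m' @ v) x"
  using Phi_Lev by (simp add: Phi_app)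

lemma P_comm: "Suc j < k \<Longrightarrow> P j (P k y) = P k (P j y)"
  unfolding P_def by (auto simp: fun_eq_iff)

lemma N_braid: assumes "x j \<in> X" "x (Suc j) \<in> X" "x (Suc (Suc j)) \<in> X"
  shows "N j (N (Suc j) (N j x)) = N (Suc j) (N j (N (Suc j) x))"
  using dist[OF assms] unfolding N_def by (simp add: fun_eq_iff)

lemma P_braid: assumes "1 \<le> j" "Suc j < n" "y \<in> Lev n"
  shows "P j (P (Suc j) (P j y)) = P (Suc j) (P j (P (Suc j) y))"
proof -
  define z where "z = P j (P (Suc j) (P j y))"
  have l1: "P j y \<in> Lev n" using P_Lev assms by auto
  have l2: "P (Suc j) (P j y) \<in> Lev n" using P_Lev[OF l1] assms by auto
  have zl: "z \<in> Lev n" unfolding z_def using P_Lev[OF l2] assms by auto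
  have "N j (N (Suc j) (N j z)) = y"
    unfolding z_def using NP[OF l2] NP[OF l1] NP[OF assms(3)] assms by auto
  moreover have "N j (N (Suc j) (N j z)) = N (Suc j) (N j (N (Suc j) z))"
    by (rule N_braid) (use LevD[OF zl] assms in auto)
  ultimately have e: "N (Suc j) (N j (N (Suc j) z)) = y" by simp
  have m1: "N (Suc j) z \<in> Lev n" using N_Lev[OF zl] assms by auto
  have m2: "N j (N (Suc j) z) \<in> Lev n" using N_Lev[OF m1] assms by auto
  have "P (Suc j) (P j (P (Suc j) y)) = z"
    unfolding e[symmetric] using PN[OF m2] PN[OF m1] PN[OF zl] assms by auto
  then show ?thesis unfolding z_def by simp
qed

lemma F_upd: "ok n a \<Longrightarrow> m > n \<Longrightarrow> F a (x(m := t)) = (F a x)(m := t)"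
  unfolding ok_def F_def P_def N_def by (auto simp: fun_eq_iff)

lemma Phi_upd: "\<forall>a\<in>set w. ok n a \<Longrightarrow> m > n \<Longrightarrow> Phi w (x(m := t)) = (Phi w x)(m := t)"
  by (induction w arbitrary: x) (auto simp: F_upd)

lemma fun_eq3: "f = g \<longleftrightarrow> (f n = g n \<and> f (Suc n) = g (Suc n) \<and> (\<forall>i. i \<noteq> n \<and> i \<noteq> Suc n \<longrightarrow> f i = g i))"
  by (auto simp: fun_eq_iff)

lemma stab_char:
  assumes w: "\<forall>a\<in>set w. ok n a" and n: "1 \<le> n" and e: "e = int n \<or> e = - int n"
  shows "y \<in> Fix (Suc n) (w @ [e]) \<longleftrightarrow>
     y \<in> Lev (Suc n) \<and> y(Suc n := undefined) \<in> Fix n w \<and> y (Suc n) = y n"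
proof (cases "y \<in> Lev (Suc n)")
  case False then show ?thesis unfolding Fix_def by auto
next
  case True
  define x where "x = y(Suc n := undefined)"
  define t where "t = y (Suc n)"
  have yx: "y = x(Suc n := t)" unfolding x_def t_def by auto
  have xl: "x \<in> Lev n" using True unfolding x_def Lev_def by auto
  have tX: "t \<in> X" using LevD[OF True, of "Suc n"] unfolding t_def by auto
  define z where "z = Phi w x"
  have zl: "z \<in> Lev n" unfolding z_def using Phi_Lev[OF w xl] .
  have xn: "x n \<in> X" "x (Suc n) = undefined" using LevD[OF xl, of n] n xl unfolding Lev_def by auto
  have zn: "z n \<in> X" "z (Suc n) = undefined" using LevD[OF zl, of n] n zl unfolding Lev_def by auto
  have ph: "Phi (w @ [e]) y = F e (z(Suc n := t))"
    unfolding yx z_def using Phi_upd[OF w] by (simp add: Phi_app)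
  have yn: "y n = x n" unfolding yx by simp
  show ?thesis
  proof (cases "e = int n")
    case True
    have Fe: "F e = P n" using True n unfolding F_def by auto
    have "Phi (w @ [e]) y = y \<longleftrightarrow> z = x \<and> t = x n"
    proof
      assume H: "Phi (w @ [e]) y = y"
      have H': "(z(Suc n := t))(n := rdiv t (z n), Suc n := z n) = x(Suc n := t)"
      proof -
        have H0: "P n (z(Suc n := t)) = x(Suc n := t)" using H ph Fe yx by simp
        then show ?thesis unfolding P_def by simp
      qed
      have 1: "z n = t" using fun_cong[OF H', of "Suc n"] by simp
      have 2: "rdiv t t = x n" using fun_cong[OF H', of n] 1 by simp
      have 3: "t = x n" using 2 rdiv_uniq[OF tX tX idem[OF tX]] by simp
      have 4: "\<forall>i. i \<noteq> n \<and> i \<noteq> Suc n \<longrightarrow> z i = x i"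
      proof (intro allI impI)
        fix i assume "i \<noteq> n \<and> i \<noteq> Suc n"
        then show "z i = x i" using fun_cong[OF H', of i] by simp
      qed
      show "z = x \<and> t = x n" using 1 3 4 xn zn by (simp add: fun_eq3[of z x n])
    next
      assume H: "z = x \<and> t = x n"
      have "rdiv (x n) (x n) = x n" using rdiv_uniq[OF xn(1) xn(1) idem[OF xn(1)]] .
      have "Phi (w @ [e]) y = P n (z(Suc n := t))" using ph Fe by simp
      also have "\<dots> = y" unfolding P_def yx using H \<open>rdiv (x n) (x n) = x n\<close> by (auto simp: fun_eq_iff)
      finally show "Phi (w @ [e]) y = y" .
    qed
    then show ?thesis unfolding Fix_def using True xl
      unfolding x_def[symmetric] yn z_def t_def by auto
  next
    case False
    then have ee: "e = - int n" using e by simp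
    have Fe: "F e = N n" using ee n unfolding F_def by auto
    have "Phi (w @ [e]) y = y \<longleftrightarrow> z = x \<and> t = x n"
    proof
      assume H: "Phi (w @ [e]) y = y"
      have H': "(z(Suc n := t))(n := t, Suc n := op (z n) t) = x(Suc n := t)"
      proof -
        have H0: "N n (z(Suc n := t)) = x(Suc n := t)" using H ph Fe yx by simp
        then show ?thesis unfolding N_def by simp
      qed
      have 1: "op (z n) t = t" using fun_cong[OF H', of "Suc n"] by simp
      have 3: "t = x n" using fun_cong[OF H', of n] by simp
      have 2: "z n = t" using rdiv_uniq[OF zn(1) tX 1] rdiv_uniq[OF tX tX idem[OF tX]] by simp
      have 4: "\<forall>i. i \<noteq> n \<and> i \<noteq> Suc n \<longrightarrow> z i = x i"
      proof (intro allI impI)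
        fix i assume "i \<noteq> n \<and> i \<noteq> Suc n"
        then show "z i = x i" using fun_cong[OF H', of i] by simp
      qed
      show "z = x \<and> t = x n" using 2 3 4 xn zn by (simp add: fun_eq3[of z x n])
    next
      assume H: "z = x \<and> t = x n"
      have "Phi (w @ [e]) y = N n (z(Suc n := t))" using ph Fe by simp
      also have "\<dots> = y" unfolding N_def yx using H idem[OF xn(1)] by (auto simp: fun_eq_iff)
      finally show "Phi (w @ [e]) y = y" .
    qed
    then show ?thesis unfolding Fix_def using True xl
      unfolding x_def[symmetric] yn z_def t_def by auto
  qed
qed

lemma stab_Fix:
  assumes w: "\<forall>a\<in>set w. ok n a" and n: "1 \<le> n" and e: "e = int n \<or> e = - int n"
  shows "Fix n w \<approx> Fix (Suc n) (w @ [e])"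
proof -
  have "bij_betw (\<lambda>x. x(Suc n := x n)) (Fix n w) (Fix (Suc n) (w @ [e]))"
  proof (rule bij_betw_byWitness[where f'="\<lambda>y. y(Suc n := undefined)"])
    show "\<forall>x\<in>Fix n w. (x(Suc n := x n))(Suc n := undefined) = x"
      unfolding Fix_def Lev_def by (auto simp: fun_eq_iff)
    show "\<forall>y\<in>Fix (Suc n) (w @ [e]). (y(Suc n := undefined))(Suc n := (y(Suc n := undefined)) n) = y"
      using stab_char[OF w n e] by (auto simp: fun_eq_iff)
    show "(\<lambda>x. x(Suc n := x n)) ` Fix n w \<subseteq> Fix (Suc n) (w @ [e])"
    proof
      fix y assume "y \<in> (\<lambda>x. x(Suc n := x n)) ` Fix n w"
      then obtain x where x: "x \<in> Fix n w" "y = x(Suc n := x n)" by auto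
      have xl: "x \<in> Lev n" using x unfolding Fix_def by auto
      have "x n \<in> X" using LevD[OF xl, of n] n by auto
      then have "y \<in> Lev (Suc n)" using xl unfolding x(2) Lev_def by auto
      moreover have "y(Suc n := undefined) = x" using xl unfolding x(2) Lev_def by (auto simp: fun_eq_iff)
      ultimately show "y \<in> Fix (Suc n) (w @ [e])" using stab_char[OF w n e] x by auto
    qed
    show "(\<lambda>y. y(Suc n := undefined)) ` Fix (Suc n) (w @ [e]) \<subseteq> Fix n w"
      using stab_char[OF w n e] by auto
  qed
  then show ?thesis unfolding eqpoll_def by blast
qed

lemma conj_Fix:
  assumes "ok n a" "\<forall>b\<in>set w. ok n b"
  shows "Fix n (a # w) \<approx> Fix n (w @ [a])"
proof -
  have oa: "ok n (-a)" using assms(1) unfolding ok_def by auto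
  have "bij_betw (F a) (Fix n (a # w)) (Fix n (w @ [a]))"
  proof (rule bij_betw_byWitness[where f'="F (-a)"])
    show "\<forall>x\<in>Fix n (a # w). F (-a) (F a x) = x" unfolding Fix_def using FF[OF assms(1)] by auto
    show "\<forall>y\<in>Fix n (w @ [a]). F a (F (-a) y) = y" unfolding Fix_def using FF[OF oa] by auto
    show "F a ` Fix n (a # w) \<subseteq> Fix n (w @ [a])"
      unfolding Fix_def using F_Lev[OF assms(1)] by (auto simp: Phi_app)
    show "F (-a) ` Fix n (w @ [a]) \<subseteq> Fix n (a # w)"
    proof
      fix x assume "x \<in> F (-a) ` Fix n (w @ [a])"
      then obtain y where y: "y \<in> Lev n" "F a (Phi w y) = y" "x = F (-a) y"
        unfolding Fix_def by (auto simp: Phi_app)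
      have pl: "Phi w y \<in> Lev n" using Phi_Lev[OF assms(2) y(1)] .
      have "F a x = y" using FF[OF oa y(1)] y(3) by simp
      then have "Phi (a # w) x = Phi w y" by simp
      also have "\<dots> = F (-a) (F a (Phi w y))" using FF[OF assms(1) pl] by simp
      also have "\<dots> = x" using y by simp
      finally show "x \<in> Fix n (a # w)" unfolding Fix_def using F_Lev[OF oa y(1)] y(3) by auto
    qed
  qed
  then show ?thesis unfolding eqpoll_def by blast
qed


lemma markov_Fix: "markov_step A B \<Longrightarrow> Fix (fst A) (snd A) \<approx> Fix (fst B) (snd B)"
proof (induction rule: markov_step.induct)
  case (free_cancel n u a v)
  have ok: "\<forall>c\<in>set (u @ [a, -a] @ v). ok n c" using vok[OF free_cancel] .
  have "\<forall>y\<in>Lev n. Phi [a, -a] y = Phi [] y" using FF ok by auto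
  from Phi_mid[OF this, of u v] ok have "Fix n (u @ [a, -a] @ v) = Fix n (u @ [] @ v)"
    by (intro Fix_eq) auto
  then show ?case by simp
next
  case (far_comm n u a b v)
  have ok: "\<forall>c\<in>set (u @ [a, b] @ v). ok n c" using vok[OF far_comm(1)] .
  have "\<forall>y\<in>Lev n. Phi [a, b] y = Phi [b, a] y"
  proof
    fix y
    have "Suc (nat a) < nat b \<or> Suc (nat b) < nat a" using far_comm(2-4) by auto
    then have "P (nat b) (P (nat a) y) = P (nat a) (P (nat b) y)" using P_comm by metis
    then show "Phi [a, b] y = Phi [b, a] y" using far_comm(2,3) by (simp add: F_def)
  qed
  from Phi_mid[OF this, of u v] ok have "Fix n (u @ [a, b] @ v) = Fix n (u @ [b, a] @ v)"
    by (intro Fix_eq) auto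
  then show ?case by simp
next
  case (braid_rel n u a b v)
  have ok: "\<forall>c\<in>set (u @ [a, b, a] @ v). ok n c" using vok[OF braid_rel(1)] .
  have oa: "nat a < n" "nat b < n" using ok braid_rel(2,3) unfolding ok_def by auto
  have "\<forall>y\<in>Lev n. Phi [a, b, a] y = Phi [b, a, b] y"
  proof
    fix y assume y: "y \<in> Lev n"
    have "P (nat a) (P (nat b) (P (nat a) y)) = P (nat b) (P (nat a) (P (nat b) y))"
    proof (cases "nat b = Suc (nat a)")
      case True then show ?thesis using P_braid[OF _ _ y, of "nat a"] braid_rel(2) oa by auto
    next
      case False
      then have "nat a = Suc (nat b)" using braid_rel(2-4) by auto
      then show ?thesis using P_braid[OF _ _ y, of "nat b"] braid_rel(3) oa by auto
    qed
    then show "Phi [a, b, a] y = Phi [b, a, b] y" using braid_rel(2,3) by (simp add: F_def)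
  qed
  from Phi_mid[OF this, of u v] ok have "Fix n (u @ [a, b, a] @ v) = Fix n (u @ [b, a, b] @ v)"
    by (intro Fix_eq) auto
  then show ?case by simp
next
  case (conj n a w)
  have ok: "\<forall>c\<in>set (a # w). ok n c" using vok[OF conj] .
  then show ?case using conj_Fix[of n a w] by simp
next
  case (stab_pos n w)
  then show ?case using stab_Fix[OF vok[OF stab_pos], of "int n"] unfolding valid_braid_def by simp
next
  case (stab_neg n w)
  then show ?case using stab_Fix[OF vok[OF stab_neg], of "- int n"] unfolding valid_braid_def by simp
qed

lemma knot_Fix: "knot_eq A B \<Longrightarrow> Fix (fst A) (snd A) \<approx> Fix (fst B) (snd B)"
  unfolding knot_eq_def
proof (induction rule: rtranclp_induct)
  case base then show ?case by simp
next
  case (step y z)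
  then have "Fix (fst y) (snd y) \<approx> Fix (fst z) (snd z)"
    using markov_Fix eqpoll_sym by (metis symclp_def sup2E)
  then show ?case using step(3) eqpoll_trans by blast
qed

end

theorem corollary3p3:
  fixes X :: "'a set" and op :: "'a \<Rightarrow> 'a \<Rightarrow> 'a" and K :: braid
  assumes "quandle X op"
    and "is_knot_braid K"
    and "reversible K \<or> positive_amphicheiral K \<or> fully_amphicheiral K"
  shows "colorings X op (reverse (mirror K)) \<approx> colorings X op (mirror K)
       \<and> colorings X op (mirror K) \<approx> colorings X op (reverse K)
       \<and> colorings X op (reverse K) \<approx> colorings X op K"
proof -
  interpret qd X op using assms(1) by unfold_locales
  obtain n w where K: "K = (n, w)" by fastforce
  have ok: "\<forall>a\<in>set w. ok n a" using assms(2) vok[of n w] unfolding is_knot_braid_def K by blast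
  have ok2: "\<forall>a\<in>set (rev w). ok n a" "\<forall>a\<in>set (map uminus w). ok n a"
    "\<forall>a\<in>set (rev (map uminus w)). ok n a" using ok unfolding ok_def by auto
  have rm: "reverse (mirror K) = (n, rev (map uminus w))" "mirror K = (n, map uminus w)"
    "reverse K = (n, rev w)" unfolding K mirror_def reverse_def by auto
  have C0: "colorings X op K \<approx> Fix n w" using col_Fix[OF ok] K by simp
  have Cr: "colorings X op (reverse K) \<approx> Fix n (rev w)" using col_Fix[OF ok2(1)] rm by simp
  have Cm: "colorings X op (mirror K) \<approx> Fix n (map uminus w)" using col_Fix[OF ok2(2)] rm by simp
  have Crm: "colorings X op (reverse (mirror K)) \<approx> Fix n (rev (map uminus w))"
    using col_Fix[OF ok2(3)] rm by simp
  have Frm: "Fix n (rev (map uminus w)) = Fix n w" using Fix_inv[OF ok] .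
  have Fm: "Fix n (map uminus w) = Fix n (rev w)"
    using Fix_inv[OF ok2(1)] by (simp add: rev_map)
  have "knot_eq K (reverse K) \<or> knot_eq K (mirror K)"
    using assms(3) unfolding reversible_def positive_amphicheiral_def fully_amphicheiral_def by blast
  then have F0r: "Fix n w \<approx> Fix n (rev w)"
    using knot_Fix[of K "reverse K"] knot_Fix[of K "mirror K"] rm Fm K by auto
  show ?thesis
    by (metis C0 Cr Cm Crm Frm Fm F0r eqpoll_sym eqpoll_trans)
qed

end
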